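(* Let $f\colon\mathbb R\to\mathbb R$ be continuous with $|f(x)|\leqslant a\cosh(bx)$ for all $x$, for some $a>0$, $b\in\mathbb R$. Fix $\lambda>0$, let $P_n = e^{-\lambda}\lambda^n/n!$, and for $k\geqslant1$ let $h_k\colon y\mapsto f(y)/k$. For a compactly supported Borel probability measure $\rho$ on $\mathbb R$ and $x\in\mathbb R$ define $$\sigma^{f,\rho}_x = \sum_{n=0}^\infty P_n\,(h_{n+1})_\star\big(\delta_x*\rho^{*n}\big),\qquad \sigma^{f,\rho} = \sum_{n=0}^\infty P_n\,(h_{n+1})_\star\big(\rho^{*(n+1)}\big)$$ ($(h_k)_\star$ pushforward, $*$ convolution, $\rho^{*0}=\delta_0$), and the (finite) means $\langle\sigma^{f,\rho}_x,y\rangle=\int y\,d\sigma^{f,\rho}_x(y)$, $\langle\sigma^{f,\rho},y\rangle=\int y\,d\sigma^{f,\rho}(y)$. Let $\mathcal L>0$, $\mathcal I=[0,\mathcal L]$, let $\mathbb P^{\mathcal I}$ be the set of Borel probability measures with support in $\mathcal I$, with the topology in which $\rho_n\to\rho$ iff $\int\phi\,d\rho_n\to\int\phi\,d\rho$ for all continuous compactly supported $\phi$, and let $N^{f,\mathcal I}=\{\rho\in\mathbb P^{\mathcal I}:\langle\sigma^{f,\rho},y\rangle=0\}$. Define $$A^f(\rho) = \frac{\langle\sigma^{f,\rho}_x,y\rangle}{\langle\sigma^{f,\rho},y\rangle}\,\rho,$$ the measure with density $x\mapsto\langle\sigma^{f,\rho}_x,y\rangle/\langle\sigma^{f,\rho},y\rangle$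 with respect to $\rho$. Then $A^f$ is continuous on $\mathbb P^{\mathcal I}\setminus N^{f,\mathcal I}$.
   Context: $\delta_a$ is the Dirac measure at $a$; $\cosh$ is the hyperbolic cosine. *)

theory Defs
  imports "HOL-Probability.Probability"
begin

fun conv_pow :: "real measure \<Rightarrow> nat \<Rightarrow> real measure" where
  "conv_pow \<rho> 0 = return borel 0"
| "conv_pow \<rho> (Suc n) = convolution \<rho> (conv_pow \<rho> n)"

definition poisson_w :: "real \<Rightarrow> nat \<Rightarrow> real" where
  "poisson_w lam n = exp (- lam) * lam ^ n / fact n"

definition mix_measure :: "(real \<Rightarrow> real) \<Rightarrow> real \<Rightarrow> (nat \<Rightarrow> real measure) \<Rightarrow> real measure" where
  "mix_measure f lam \<mu> = measure_of UNIV (sets borel)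
     (\<lambda>A. \<Sum>n. ennreal (poisson_w lam n) *
            emeasure (distr (\<mu> n) borel (\<lambda>y. f y / real (Suc n))) A)"

definition sigma_x :: "(real \<Rightarrow> real) \<Rightarrow> real \<Rightarrow> real measure \<Rightarrow> real \<Rightarrow> real measure" where
  "sigma_x f lam \<rho> x = mix_measure f lam (\<lambda>n. convolution (return borel x) (conv_pow \<rho> n))"

definition sigma :: "(real \<Rightarrow> real) \<Rightarrow> real \<Rightarrow> real measure \<Rightarrow> real measure" where
  "sigma f lam \<rho> = mix_measure f lam (\<lambda>n. conv_pow \<rho> (Suc n))"

definition mean :: "real measure \<Rightarrow> real" where
  "mean \<mu> = integral\<^sup>L \<mu> (\<lambda>y. y)"

definition probI :: "real \<Rightarrow> real measure set" where
  "probI L = {\<rho>. prob_space \<rho> \<and> sets \<rho> = sets borel \<and> measure \<rho> {0..L} = 1}"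

definition N_set :: "(real \<Rightarrow> real) \<Rightarrow> real \<Rightarrow> real \<Rightarrow> real measure set" where
  "N_set f lam L = {\<rho> \<in> probI L. mean (sigma f lam \<rho>) = 0}"

definition A_density :: "(real \<Rightarrow> real) \<Rightarrow> real \<Rightarrow> real measure \<Rightarrow> real \<Rightarrow> real" where
  "A_density f lam \<rho> x = mean (sigma_x f lam \<rho> x) / mean (sigma f lam \<rho>)"

definition vague_conv :: "(nat \<Rightarrow> real measure) \<Rightarrow> real measure \<Rightarrow> bool" where
  "vague_conv \<mu>s \<mu> \<longleftrightarrow> (\<forall>\<phi>::real \<Rightarrow> real. continuous_on UNIV \<phi> \<and> compact (closure {x. \<phi> x \<noteq> 0}) \<longrightarrow>
      (\<lambda>n. integral\<^sup>L (\<mu>s n) \<phi>) \<longlonglongrightarrow> integral\<^sup>L \<mu> \<phi>)"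

text \<open>Same convergence for the (possibly signed) measures A^f(rho_n) = D_n rho_n.\<close>
definition vague_conv_dens :: "(nat \<Rightarrow> real measure) \<Rightarrow> (nat \<Rightarrow> real \<Rightarrow> real) \<Rightarrow> real measure \<Rightarrow> (real \<Rightarrow> real) \<Rightarrow> bool" where
  "vague_conv_dens \<mu>s Ds \<mu> D \<longleftrightarrow> (\<forall>\<phi>::real \<Rightarrow> real. continuous_on UNIV \<phi> \<and> compact (closure {x. \<phi> x \<noteq> 0}) \<longrightarrow>
      (\<lambda>n. integral\<^sup>L (\<mu>s n) (\<lambda>x. \<phi> x * Ds n x)) \<longlonglongrightarrow> integral\<^sup>L \<mu> (\<lambda>x. \<phi> x * D x))"

end

theory Submission
  imports Defs
begin

lemma ennreal_suminf_swap:
  fixes g :: "nat \<Rightarrow> nat \<Rightarrow> ennreal"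
  shows "(\<Sum>i. \<Sum>n. g n i) = (\<Sum>n. \<Sum>i. g n i)"
proof -
  have "(\<Sum>i. \<Sum>n. g n i) = (\<Sum>i. \<integral>\<^sup>+n. g n i \<partial>count_space UNIV)"
    by (simp add: nn_integral_count_space_nat)
  also have "\<dots> = (\<integral>\<^sup>+n. (\<Sum>i. g n i) \<partial>count_space UNIV)"
    by (rule nn_integral_suminf[symmetric]) auto
  also have "\<dots> = (\<Sum>n. \<Sum>i. g n i)"
    by (simp add: nn_integral_count_space_nat)
  finally show ?thesis .
qed

definition mixM :: "(nat \<Rightarrow> real measure) \<Rightarrow> (nat \<Rightarrow> ennreal) \<Rightarrow> real measure" where
  "mixM Ms w = measure_of UNIV (sets borel) (\<lambda>A. \<Sum>n. w n * emeasure (Ms n) A)"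

locale mixl =
  fixes Ms :: "nat \<Rightarrow> real measure" and w :: "nat \<Rightarrow> ennreal"
  assumes sets_Ms: "\<And>n. sets (Ms n) = sets borel"
begin

abbreviation "MM \<equiv> mixM Ms w"

lemma sets_MM[simp, measurable_cong]: "sets MM = sets borel"
  unfolding mixM_def using sets.sigma_sets_eq[of borel] by (simp add: sets_measure_of_conv)

lemma space_MM[simp]: "space MM = UNIV"
  using sets_eq_imp_space_eq[OF sets_MM] by simp

lemma emeasure_MM: "A \<in> sets borel \<Longrightarrow> emeasure MM A = (\<Sum>n. w n * emeasure (Ms n) A)"
  unfolding mixM_def
proof (rule emeasure_measure_of_sigma)
  show "sigma_algebra UNIV (sets borel)"
    using sets.sigma_algebra_axioms[of borel] by simp
  show "positive (sets borel) (\<lambda>A. \<Sum>n. w n * emeasure (Ms n) A)"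
    by (simp add: positive_def)
  show "countably_additive (sets borel) (\<lambda>A. \<Sum>n. w n * emeasure (Ms n) A)"
  proof (rule countably_additiveI)
    fix A :: "nat \<Rightarrow> real set"
    assume A: "range A \<subseteq> sets borel" "disjoint_family A"
    have "(\<Sum>i. \<Sum>n. w n * emeasure (Ms n) (A i)) = (\<Sum>n. \<Sum>i. w n * emeasure (Ms n) (A i))"
      by (rule ennreal_suminf_swap)
    also have "\<dots> = (\<Sum>n. w n * emeasure (Ms n) (\<Union>i. A i))"
      using A by (simp add: suminf_emeasure sets_Ms)
    finally show "(\<Sum>i. \<Sum>n. w n * emeasure (Ms n) (A i)) = (\<Sum>n. w n * emeasure (Ms n) (\<Union>i. A i))" .
  qed
qed

lemma nn_integral_MM:
  assumes "u \<in> borel_measurable borel"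
  shows "(\<integral>\<^sup>+x. u x \<partial>MM) = (\<Sum>n. w n * (\<integral>\<^sup>+x. u x \<partial>Ms n))"
  using assms
proof (induction rule: borel_measurable_induct)
  case (cong f g)
  then show ?case by simp
next
  case (set A)
  then show ?case by (simp add: emeasure_MM sets_Ms)
next
  case (mult u c)
  have m: "u \<in> borel_measurable (Ms n)" for n
    using mult(2) by (simp add: measurable_cong_sets[OF sets_Ms refl])
  have m2: "u \<in> borel_measurable MM"
    using mult(2) by (simp add: measurable_cong_sets[OF sets_MM refl])
  show ?case
    using mult by (simp add: nn_integral_cmult m m2 mult.left_commute)
next
  case (add u v)
  have m: "u \<in> borel_measurable (Ms n)" "v \<in> borel_measurable (Ms n)" for n
    using add by (simp_all add: measurable_cong_sets[OF sets_Ms refl])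
  have m2: "u \<in> borel_measurable MM" "v \<in> borel_measurable MM"
    using add by (simp_all add: measurable_cong_sets[OF sets_MM refl])
  show ?case
    using add by (simp add: nn_integral_add m m2 distrib_left suminf_add[symmetric])
next
  case (seq U)
  have m: "U i \<in> borel_measurable (Ms n)" for n i
    using seq by (simp add: measurable_cong_sets[OF sets_Ms refl])
  have m2: "U i \<in> borel_measurable MM" for i
    using seq by (simp add: measurable_cong_sets[OF sets_MM refl])
  have inc: "incseq (\<lambda>i. U i)" using seq by simp
  have "(\<integral>\<^sup>+x. (SUP i. U i) x \<partial>MM) = (SUP i. \<integral>\<^sup>+x. U i x \<partial>MM)"
    using nn_integral_monotone_convergence_SUP[OF inc m2] by (simp add: SUP_apply image_comp o_def)
  also have "\<dots> = (SUP i. \<Sum>n. w n * (\<integral>\<^sup>+x. U i x \<partial>Ms n))"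
    using seq by simp
  also have "\<dots> = (\<Sum>n. SUP i. w n * (\<integral>\<^sup>+x. U i x \<partial>Ms n))"
  proof (rule ennreal_suminf_SUP_eq[symmetric])
    fix n show "incseq (\<lambda>i. w n * (\<integral>\<^sup>+x. U i x \<partial>Ms n))"
    proof (rule incseq_SucI)
      fix i
      have "U i x \<le> U (Suc i) x" for x using inc by (simp add: incseq_Suc_iff le_fun_def)
      then have "(\<integral>\<^sup>+x. U i x \<partial>Ms n) \<le> (\<integral>\<^sup>+x. U (Suc i) x \<partial>Ms n)" by (rule nn_integral_mono)
      then show "w n * (\<integral>\<^sup>+x. U i x \<partial>Ms n) \<le> w n * (\<integral>\<^sup>+x. U (Suc i) x \<partial>Ms n)" by (rule mult_left_mono) simp
    qed
  qed
  also have "\<dots> = (\<Sum>n. w n * (SUP i. (\<integral>\<^sup>+x. U i x \<partial>Ms n)))"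
    by (simp add: SUP_mult_left_ennreal)
  also have "\<dots> = (\<Sum>n. w n * (\<integral>\<^sup>+x. (SUP i. U i) x \<partial>Ms n))"
    using nn_integral_monotone_convergence_SUP[OF inc m] by (simp add: SUP_apply image_comp o_def)
  finally show ?case .
qed

end

lemma abs_div_Suc_le: "\<bar>(x::real) / real (Suc n)\<bar> \<le> \<bar>x\<bar>"
  by (simp add: abs_divide divide_le_eq mult_le_cancel_left1 field_simps)

lemma mean_mix:
  fixes f :: "real \<Rightarrow> real" and B :: "nat \<Rightarrow> real" and \<nu> :: "nat \<Rightarrow> real measure" and lam :: real
  assumes lam: "lam \<ge> 0" and \<nu>: "\<And>n. prob_space (\<nu> n)" "\<And>n. sets (\<nu> n) = sets borel"
    and fm: "f \<in> borel_measurable borel"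
    and B: "\<And>n. AE y in \<nu> n. \<bar>f y\<bar> \<le> B n" and B0: "\<And>n. B n \<ge> 0"
    and summ: "summable (\<lambda>n. poisson_w lam n * B n)"
  shows "mean (mix_measure f lam \<nu>) = (\<Sum>n. poisson_w lam n * ((\<integral>y. f y \<partial>\<nu> n) / real (Suc n)))"
proof -
  define h where "h = (\<lambda>n y. f y / real (Suc n))"
  have hm[measurable]: "h n \<in> borel_measurable borel" for n unfolding h_def using fm by measurable
  have hm2: "h n \<in> borel_measurable (\<nu> n)" for n using hm by (simp add: measurable_cong_sets[OF \<nu>(2) refl])
  interpret mixl "\<lambda>n. distr (\<nu> n) borel (h n)" "\<lambda>n. ennreal (poisson_w lam n)"
    by standard simp
  have MM: "mix_measure f lam \<nu> = MM" unfolding mix_measure_def mixM_def h_def by simp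
  have P0: "poisson_w lam n \<ge> 0" for n using lam by (simp add: poisson_w_def)
  have hB: "AE y in \<nu> n. \<bar>h n y\<bar> \<le> B n" for n
    using B[of n] unfolding h_def by eventually_elim (rule order_trans[OF abs_div_Suc_le])
  have key: "(\<integral>\<^sup>+x. ennreal (u x) \<partial>MM) = ennreal (\<Sum>n. poisson_w lam n * (\<integral>y. u (h n y) \<partial>\<nu> n))
     \<and> summable (\<lambda>n. poisson_w lam n * (\<integral>y. u (h n y) \<partial>\<nu> n))
     \<and> (\<forall>n. integrable (\<nu> n) (\<lambda>y. u (h n y)))"
    if um[measurable]: "u \<in> borel_measurable borel" and u0: "\<And>x. 0 \<le> u x" and ub: "\<And>x. u x \<le> \<bar>x\<bar>" for u
  proof -
    have int: "integrable (\<nu> n) (\<lambda>y. u (h n y))" for n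
    proof (rule finite_measure.integrable_const_bound)
      show "finite_measure (\<nu> n)" using \<nu>(1) by (simp add: prob_space.finite_measure)
      show "AE x in \<nu> n. norm (u (h n x)) \<le> B n"
        using hB[of n] by eventually_elim (metis abs_of_nonneg order_trans real_norm_def u0 ub)
      show "(\<lambda>y. u (h n y)) \<in> borel_measurable (\<nu> n)" using hm2 um by measurable
    qed
    have le: "(\<integral>y. u (h n y) \<partial>\<nu> n) \<le> B n" for n
    proof -
      have "AE y in \<nu> n. u (h n y) \<le> B n"
        using hB[of n] by eventually_elim (metis order_trans ub)
      then show ?thesis using prob_space.integral_le_const[OF \<nu>(1) int] by blast
    qed
    have ge: "(\<integral>y. u (h n y) \<partial>\<nu> n) \<ge> 0" for n
      by (simp add: u0)
    have sm: "summable (\<lambda>n. poisson_w lam n * (\<integral>y. u (h n y) \<partial>\<nu> n))"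
      by (rule summable_comparison_test[OF _ summ])
         (use P0 le ge in \<open>auto intro!: exI[of _ 0] mult_left_mono\<close>)
    have "(\<integral>\<^sup>+x. ennreal (u x) \<partial>MM) = (\<Sum>n. ennreal (poisson_w lam n) * (\<integral>\<^sup>+x. ennreal (u x) \<partial>distr (\<nu> n) borel (h n)))"
      by (rule nn_integral_MM) measurable
    also have "\<dots> = (\<Sum>n. ennreal (poisson_w lam n) * ennreal (\<integral>y. u (h n y) \<partial>\<nu> n))"
      by (subst nn_integral_distr) (auto simp: hm2 intro!: suminf_cong arg_cong2[where f="(*)"] nn_integral_eq_integral int u0)
    also have "\<dots> = (\<Sum>n. ennreal (poisson_w lam n * (\<integral>y. u (h n y) \<partial>\<nu> n)))"
      using P0 ge by (simp add: ennreal_mult)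
    also have "\<dots> = ennreal (\<Sum>n. poisson_w lam n * (\<integral>y. u (h n y) \<partial>\<nu> n))"
      by (rule suminf_ennreal2) (use P0 ge sm in auto)
    finally show ?thesis using sm int by blast
  qed
  note kp = key[of "\<lambda>x. max 0 x"] and kn = key[of "\<lambda>x. max 0 (-x)"] and ka = key[of "\<lambda>x. \<bar>x\<bar>"]
  have kp: "(\<integral>\<^sup>+x. ennreal (max 0 x) \<partial>MM) = ennreal (\<Sum>n. poisson_w lam n * (\<integral>y. max 0 (h n y) \<partial>\<nu> n))"
     "summable (\<lambda>n. poisson_w lam n * (\<integral>y. max 0 (h n y) \<partial>\<nu> n))"
     "\<And>n. integrable (\<nu> n) (\<lambda>y. max 0 (h n y))"
    using kp by auto
  have kn: "(\<integral>\<^sup>+x. ennreal (max 0 (-x)) \<partial>MM) = ennreal (\<Sum>n. poisson_w lam n * (\<integral>y. max 0 (- h n y) \<partial>\<nu> n))"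
     "summable (\<lambda>n. poisson_w lam n * (\<integral>y. max 0 (- h n y) \<partial>\<nu> n))"
     "\<And>n. integrable (\<nu> n) (\<lambda>y. max 0 (- h n y))"
    using kn by auto
  have ka: "(\<integral>\<^sup>+x. ennreal \<bar>x\<bar> \<partial>MM) < \<infinity>"
    using ka by auto
  have intM: "integrable MM (\<lambda>x. x)"
    by (rule integrableI_bounded) (use ka in auto)
  have "mean MM = enn2real (\<integral>\<^sup>+x. ennreal x \<partial>MM) - enn2real (\<integral>\<^sup>+x. ennreal (- x) \<partial>MM)"
    unfolding mean_def by (rule real_lebesgue_integral_def[OF intM])
  also have "(\<integral>\<^sup>+x. ennreal x \<partial>MM) = (\<integral>\<^sup>+x. ennreal (max 0 x) \<partial>MM)"
    by (simp add: ennreal_max_0)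
  also have "(\<integral>\<^sup>+x. ennreal (- x) \<partial>MM) = (\<integral>\<^sup>+x. ennreal (max 0 (- x)) \<partial>MM)"
    by (simp add: ennreal_max_0)
  finally have "mean MM = (\<Sum>n. poisson_w lam n * (\<integral>y. max 0 (h n y) \<partial>\<nu> n)) - (\<Sum>n. poisson_w lam n * (\<integral>y. max 0 (- h n y) \<partial>\<nu> n))"
    using kp(1) kn(1) by (simp add: P0 sum_nonneg suminf_nonneg kp(2) kn(2) mult_nonneg_nonneg)
  also have "\<dots> = (\<Sum>n. poisson_w lam n * (\<integral>y. max 0 (h n y) \<partial>\<nu> n) - poisson_w lam n * (\<integral>y. max 0 (- h n y) \<partial>\<nu> n))"
    using suminf_diff[OF kp(2) kn(2)] by simp
  also have "\<dots> = (\<Sum>n. poisson_w lam n * (\<integral>y. h n y \<partial>\<nu> n))"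
  proof (rule suminf_cong)
    fix n
    have "(\<integral>y. max 0 (h n y) \<partial>\<nu> n) - (\<integral>y. max 0 (- h n y) \<partial>\<nu> n) = (\<integral>y. max 0 (h n y) - max 0 (- h n y) \<partial>\<nu> n)"
      using Bochner_Integration.integral_diff[OF kp(3) kn(3)] by simp
    also have "\<dots> = (\<integral>y. h n y \<partial>\<nu> n)"
      by (rule Bochner_Integration.integral_cong) auto
    finally show "poisson_w lam n * (\<integral>y. max 0 (h n y) \<partial>\<nu> n) - poisson_w lam n * (\<integral>y. max 0 (- h n y) \<partial>\<nu> n) = poisson_w lam n * (\<integral>y. h n y \<partial>\<nu> n)"
      by (metis right_diff_distrib)
  qed
  finally show ?thesis using MM unfolding h_def by simp
qed

lemma cont_bound:
  fixes h :: "real \<Rightarrow> real"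
  assumes "continuous_on UNIV h"
  shows "\<exists>K. \<forall>x\<in>{c..d}. \<bar>h x\<bar> \<le> K"
proof -
  have "compact (h ` {c..d})"
    by (rule compact_continuous_image) (use assms continuous_on_subset in auto)
  then have "bounded (h ` {c..d})" by (rule compact_imp_bounded)
  then obtain K where "\<forall>y\<in>h ` {c..d}. norm y \<le> K" by (auto simp: bounded_iff)
  then show ?thesis by auto
qed

lemma probI_AE:
  assumes "\<mu> \<in> probI L" shows "AE x in \<mu>. x \<in> {0..L}"
proof -
  have p: "prob_space \<mu>" "sets \<mu> = sets borel" "measure \<mu> {0..L} = 1" using assms by (auto simp: probI_def)
  have "{0..L} \<in> sets \<mu>" using p by simp
  from prob_space.AE_in_set_eq_1[OF p(1) this] p(3) show ?thesis by blast
qed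

lemma conv_basic:
  assumes "prob_space M" "prob_space N" and [measurable_cong]: "sets M = sets borel" "sets N = sets borel"
  shows "prob_space (convolution M N)"
proof -
  interpret M: prob_space M by fact
  interpret N: prob_space N by fact
  interpret pair_prob_space M N ..
  show ?thesis unfolding convolution_def
    by (rule prob_space.prob_space_distr) (auto intro: prob_space_axioms)
qed

lemma conv_AE:
  fixes M N :: "real measure"
  assumes "prob_space M" "prob_space N" and [measurable_cong]: "sets M = sets borel" "sets N = sets borel"
    and AM: "AE x in M. x \<in> {a..b}" and AN: "AE y in N. y \<in> {c..d}"
  shows "AE z in convolution M N. z \<in> {a+c..b+d}"
proof -
  interpret M: prob_space M by fact
  interpret N: prob_space N by fact
  interpret pair_prob_space M N ..
  have "AE p in M \<Otimes>\<^sub>M N. (case p of (x, y) \<Rightarrow> x + y) \<in> {a+c..b+d}"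
  proof (rule AE_pair_measure)
    show "{p \<in> space (M \<Otimes>\<^sub>M N). (case p of (x, y) \<Rightarrow> x + y) \<in> {a + c..b + d}} \<in> sets (M \<Otimes>\<^sub>M N)"
      by measurable
    show "AE x in M. AE y in N. (case (x, y) of (x, y) \<Rightarrow> x + y) \<in> {a + c..b + d}"
      using AM
    proof eventually_elim
      case (elim x)
      from AN show ?case by eventually_elim (use elim in auto)
    qed
  qed
  then show ?thesis unfolding convolution_def
    by (subst AE_distr_iff) auto
qed

lemma conv_integral:
  fixes h :: "real \<Rightarrow> real"
  assumes "prob_space M" "prob_space N" and [measurable_cong]: "sets M = sets borel" "sets N = sets borel"
    and AM: "AE x in M. x \<in> {a..b}" and AN: "AE y in N. y \<in> {c..d}"
    and hc: "continuous_on UNIV h"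
  shows "integral\<^sup>L (convolution M N) h = (\<integral>x. \<integral>y. h (x + y) \<partial>N \<partial>M)"
proof -
  interpret M: prob_space M by fact
  interpret N: prob_space N by fact
  interpret pair_prob_space M N ..
  have hm[measurable]: "h \<in> borel_measurable borel"
    using hc by (rule borel_measurable_continuous_onI)
  obtain K where K: "\<forall>z\<in>{a+c..b+d}. \<bar>h z\<bar> \<le> K" using cont_bound[OF hc] by blast
  have "AE p in M \<Otimes>\<^sub>M N. (case p of (x, y) \<Rightarrow> x + y) \<in> {a+c..b+d}"
  proof (rule AE_pair_measure)
    show "{p \<in> space (M \<Otimes>\<^sub>M N). (case p of (x, y) \<Rightarrow> x + y) \<in> {a + c..b + d}} \<in> sets (M \<Otimes>\<^sub>M N)"
      by measurable
    show "AE x in M. AE y in N. (case (x, y) of (x, y) \<Rightarrow> x + y) \<in> {a + c..b + d}"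
      using AM
    proof eventually_elim
      case (elim x)
      from AN show ?case by eventually_elim (use elim in auto)
    qed
  qed
  then have AEK: "AE p in M \<Otimes>\<^sub>M N. norm (h (case p of (x, y) \<Rightarrow> x + y)) \<le> K"
    by eventually_elim (use K in auto)
  have int: "integrable (M \<Otimes>\<^sub>M N) (\<lambda>p. h (case p of (x, y) \<Rightarrow> x + y))"
    by (rule finite_measure.integrable_const_bound[OF _ AEK]) (auto intro: finite_measure_axioms)
  have "integral\<^sup>L (convolution M N) h = (\<integral>p. h (case p of (x, y) \<Rightarrow> x + y) \<partial>(M \<Otimes>\<^sub>M N))"
    unfolding convolution_def by (rule integral_distr) auto
  also have "\<dots> = (\<integral>x. \<integral>y. h (x + y) \<partial>N \<partial>M)"
    using integral_fst'[OF int] by simp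
  finally show ?thesis .
qed

lemma conv_pow_props:
  assumes "\<mu> \<in> probI L"
  shows "prob_space (conv_pow \<mu> k) \<and> sets (conv_pow \<mu> k) = sets borel \<and> (AE s in conv_pow \<mu> k. s \<in> {0..real k * L})"
proof (induction k)
  case 0
  have e: "conv_pow \<mu> 0 = return borel (0::real)" by simp
  have "AE s in return borel (0::real). s \<in> {0..real 0 * L}" by (subst AE_return) auto
  then show ?case unfolding e by (simp add: prob_space_return)
next
  case (Suc k)
  have m: "prob_space \<mu>" "sets \<mu> = sets borel" using assms by (auto simp: probI_def)
  have "AE z in convolution \<mu> (conv_pow \<mu> k). z \<in> {0 + 0..L + real k * L}"
    by (rule conv_AE) (use Suc m probI_AE[OF assms] in auto)
  then have "AE z in convolution \<mu> (conv_pow \<mu> k). z \<in> {0..real (Suc k) * L}"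
    by (simp add: algebra_simps)
  moreover have "prob_space (convolution \<mu> (conv_pow \<mu> k))" using Suc m by (auto intro: conv_basic)
  moreover have e: "conv_pow \<mu> (Suc k) = convolution \<mu> (conv_pow \<mu> k)" by simp
  ultimately show ?case unfolding e by simp
qed

definition gk :: "(real \<Rightarrow> real) \<Rightarrow> nat \<Rightarrow> real measure \<Rightarrow> real \<Rightarrow> real" where
  "gk f k \<mu> y = (\<integral>s. f (y + s) \<partial>conv_pow \<mu> k)"

lemma gk_0:
  assumes "continuous_on UNIV f" shows "gk f 0 \<mu> y = f y"
proof -
  have [measurable]: "f \<in> borel_measurable borel" using assms by (rule borel_measurable_continuous_onI)
  show ?thesis unfolding gk_def conv_pow.simps by (subst integral_return) auto
qed

lemma gk_Suc:
  assumes "continuous_on UNIV f" "\<mu> \<in> probI L"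
  shows "gk f (Suc k) \<mu> y = (\<integral>t. gk f k \<mu> (y + t) \<partial>\<mu>)"
proof -
  have m: "prob_space \<mu>" "sets \<mu> = sets borel" using assms by (auto simp: probI_def)
  note P = conv_pow_props[OF assms(2), of k]
  have fc2: "continuous_on UNIV (\<lambda>s. f (y + s))"
    by (rule continuous_on_compose2[OF assms(1)]) (auto intro: continuous_intros)
  have "gk f (Suc k) \<mu> y = (\<integral>x. \<integral>s. f (y + (x + s)) \<partial>conv_pow \<mu> k \<partial>\<mu>)"
    unfolding gk_def conv_pow.simps
    by (rule conv_integral[where a=0 and b=L and c=0 and d="real k * L", of _ _ "\<lambda>s. f (y + s)"])
       (use m P probI_AE[OF assms(2)] fc2 in auto)
  then show ?thesis by (simp add: gk_def add.assoc)
qed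

lemma cosh_le_exp_abs: "cosh (z::real) \<le> exp \<bar>z\<bar>"
proof -
  have "exp z \<le> exp \<bar>z\<bar>" "exp (-z) \<le> exp \<bar>z\<bar>" by auto
  then have "exp z + exp (-z) \<le> 2 * exp \<bar>z\<bar>" by linarith
  then show ?thesis by (simp add: cosh_def)
qed

lemma gk_bound:
  assumes fb: "\<And>x. \<bar>f x\<bar> \<le> a * cosh (b * x)" and a: "a > 0" and L: "L > 0"
    and fc: "continuous_on UNIV f" and \<mu>: "\<mu> \<in> probI L"
  shows "\<bar>gk f k \<mu> y\<bar> \<le> a * exp (\<bar>b\<bar> * \<bar>y\<bar>) * exp (\<bar>b\<bar> * L) ^ k"
proof -
  note P = conv_pow_props[OF \<mu>, of k]
  have fm[measurable]: "f \<in> borel_measurable borel" using fc by (rule borel_measurable_continuous_onI)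
  have pt: "\<bar>f (y + s)\<bar> \<le> a * exp (\<bar>b\<bar> * \<bar>y\<bar>) * exp (\<bar>b\<bar> * L) ^ k" if s: "s \<in> {0..real k * L}" for s
  proof -
    have "\<bar>f (y + s)\<bar> \<le> a * cosh (b * (y + s))" by (rule fb)
    also have "\<dots> \<le> a * exp \<bar>b * (y + s)\<bar>" using a cosh_le_exp_abs by simp
    also have "\<bar>b * (y + s)\<bar> \<le> \<bar>b\<bar> * \<bar>y\<bar> + real k * (\<bar>b\<bar> * L)"
    proof -
      have "\<bar>y + s\<bar> \<le> \<bar>y\<bar> + real k * L" using s by auto
      then have "\<bar>b\<bar> * \<bar>y + s\<bar> \<le> \<bar>b\<bar> * (\<bar>y\<bar> + real k * L)" by (rule mult_left_mono) simp
      moreover have "\<bar>b * (y + s)\<bar> = \<bar>b\<bar> * \<bar>y + s\<bar>" by (rule abs_mult)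
      moreover have "\<bar>b\<bar> * (\<bar>y\<bar> + real k * L) = \<bar>b\<bar> * \<bar>y\<bar> + real k * (\<bar>b\<bar> * L)" by (simp add: algebra_simps)
      ultimately show ?thesis by linarith
    qed
    then have "a * exp \<bar>b * (y + s)\<bar> \<le> a * exp (\<bar>b\<bar> * \<bar>y\<bar> + real k * (\<bar>b\<bar> * L))" using a by simp
    also have "\<dots> = a * exp (\<bar>b\<bar> * \<bar>y\<bar>) * exp (\<bar>b\<bar> * L) ^ k"
      by (simp add: exp_add exp_of_nat_mult)
    finally show ?thesis .
  qed
  have AEb: "AE s in conv_pow \<mu> k. norm (f (y + s)) \<le> a * exp (\<bar>b\<bar> * \<bar>y\<bar>) * exp (\<bar>b\<bar> * L) ^ k"
  proof -
    have P3: "AE s in conv_pow \<mu> k. s \<in> {0..real k * L}" using P by blast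
    then show ?thesis by eventually_elim (metis pt real_norm_def)
  qed
  have int: "integrable (conv_pow \<mu> k) (\<lambda>s. f (y + s))"
    by (rule finite_measure.integrable_const_bound[OF _ AEb]) (use P in \<open>auto simp: prob_space.finite_measure\<close>)
  have "\<bar>gk f k \<mu> y\<bar> \<le> (\<integral>s. norm (f (y + s)) \<partial>conv_pow \<mu> k)"
    unfolding gk_def using integral_norm_bound[of "conv_pow \<mu> k" "\<lambda>s. f (y + s)"] by simp
  also have "\<dots> \<le> a * exp (\<bar>b\<bar> * \<bar>y\<bar>) * exp (\<bar>b\<bar> * L) ^ k"
    using P AEb int by (intro prob_space.integral_le_const) auto
  finally show ?thesis .
qed

lemma probI_rd: "\<mu> \<in> probI L \<Longrightarrow> real_distribution \<mu>"
  by (simp add: probI_def real_distribution_def real_distribution_axioms_def)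

lemma vague_cont:
  fixes h :: "real \<Rightarrow> real"
  assumes \<rho>s: "\<And>n. \<rho>s n \<in> probI L" and \<rho>: "\<rho> \<in> probI L" and vc: "vague_conv \<rho>s \<rho>"
    and hc: "continuous_on UNIV h"
  shows "(\<lambda>n. integral\<^sup>L (\<rho>s n) h) \<longlonglongrightarrow> integral\<^sup>L \<rho> h"
proof -
  define cut where "cut t = max 0 (min 1 (min (t + 1) (L + 1 - t)))" for t :: real
  define \<phi> where "\<phi> t = h t * cut t" for t
  have cutc: "continuous_on UNIV cut" unfolding cut_def by (intro continuous_intros)
  have \<phi>c: "continuous_on UNIV \<phi>" unfolding \<phi>_def by (intro continuous_intros hc cutc)
  have sub: "{x. \<phi> x \<noteq> 0} \<subseteq> {-1..L+1}"
  proof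
    fix t assume "t \<in> {x. \<phi> x \<noteq> 0}"
    then have "cut t \<noteq> 0" by (auto simp: \<phi>_def)
    then show "t \<in> {-1..L+1}" unfolding cut_def by (auto simp: max_def min_def split: if_splits)
  qed
  have "closure {x. \<phi> x \<noteq> 0} \<subseteq> {-1..L+1}"
    by (rule closure_minimal[OF sub]) simp
  then have cpt: "compact (closure {x. \<phi> x \<noteq> 0})"
    by (meson bounded_closed_interval bounded_subset closed_closure compact_eq_bounded_closed)
  have eq: "integral\<^sup>L \<nu> h = integral\<^sup>L \<nu> \<phi>" if \<nu>: "\<nu> \<in> probI L" for \<nu>
  proof (rule integral_cong_AE)
    have s: "sets \<nu> = sets borel" using \<nu> by (simp add: probI_def)
    show "h \<in> borel_measurable \<nu>" "\<phi> \<in> borel_measurable \<nu>"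
      using hc \<phi>c by (auto simp: measurable_cong_sets[OF s refl] intro: borel_measurable_continuous_onI)
    show "AE x in \<nu>. h x = \<phi> x"
      using probI_AE[OF \<nu>] by eventually_elim (auto simp: \<phi>_def cut_def)
  qed
  have "(\<lambda>n. integral\<^sup>L (\<rho>s n) \<phi>) \<longlonglongrightarrow> integral\<^sup>L \<rho> \<phi>"
    using vc \<phi>c cpt unfolding vague_conv_def by blast
  then show ?thesis using eq[OF \<rho>] eq[OF \<rho>s] by simp
qed

lemma weak_from_vague:
  assumes \<rho>s: "\<And>n. \<rho>s n \<in> probI L" and \<rho>: "\<rho> \<in> probI L" and vc: "vague_conv \<rho>s \<rho>"
  shows "weak_conv_m \<rho>s \<rho>"
proof (rule integral_cts_step_conv_imp_weak_conv)
  show "real_distribution (\<rho>s n)" for n using probI_rd[OF \<rho>s] .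
  show "real_distribution \<rho>" using probI_rd[OF \<rho>] .
  fix x y :: real assume "x < y"
  then have "continuous_on UNIV (cts_step x y)"
    by (intro uniformly_continuous_imp_continuous cts_step_uniformly_continuous)
  then show "(\<lambda>n. integral\<^sup>L (\<rho>s n) (cts_step x y)) \<longlonglongrightarrow> integral\<^sup>L \<rho> (cts_step x y)"
    by (rule vague_cont[OF \<rho>s \<rho> vc])
qed

lemma conv_lemma:
  fixes F :: "nat \<Rightarrow> real \<Rightarrow> real" and G :: "real \<Rightarrow> real"
  assumes \<rho>s: "\<And>n. \<rho>s n \<in> probI L" and \<rho>: "\<rho> \<in> probI L" and vc: "vague_conv \<rho>s \<rho>"
    and Fm[measurable]: "\<And>n. F n \<in> borel_measurable borel" and Gm[measurable]: "G \<in> borel_measurable borel"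
    and conv: "\<And>ts t. (\<And>n. ts n \<in> {0..L}) \<Longrightarrow> t \<in> {0..L} \<Longrightarrow> ts \<longlonglongrightarrow> t \<Longrightarrow> (\<lambda>n. F n (ts n)) \<longlonglongrightarrow> G t"
    and bnd: "\<And>n y. y \<in> {0..L} \<Longrightarrow> \<bar>F n y\<bar> \<le> B"
  shows "(\<lambda>n. integral\<^sup>L (\<rho>s n) (F n)) \<longlonglongrightarrow> integral\<^sup>L \<rho> G"
proof -
  have wc: "weak_conv_m \<rho>s \<rho>" by (rule weak_from_vague[OF \<rho>s \<rho> vc])
  obtain \<Omega> :: "real measure" and Ys :: "nat \<Rightarrow> real \<Rightarrow> real" and Y :: "real \<Rightarrow> real" where
    ps: "prob_space \<Omega>" and Ysm[measurable]: "\<And>n. Ys n \<in> borel_measurable \<Omega>"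
    and dYs: "\<And>n. distr \<Omega> borel (Ys n) = \<rho>s n" and Ym: "Y \<in> measurable \<Omega> lborel"
    and dY: "distr \<Omega> borel Y = \<rho>" and lim: "\<And>x. x \<in> space \<Omega> \<Longrightarrow> (\<lambda>n. Ys n x) \<longlonglongrightarrow> Y x"
    using Skorohod[OF probI_rd[OF \<rho>s] probI_rd[OF \<rho>] wc] by metis
  interpret prob_space \<Omega> by fact
  have Ym2[measurable]: "Y \<in> borel_measurable \<Omega>" using Ym by simp
  have AEn: "AE \<omega> in \<Omega>. Ys n \<omega> \<in> {0..L}" for n
  proof -
    have "AE x in distr \<Omega> borel (Ys n). x \<in> {0..L}" unfolding dYs by (rule probI_AE[OF \<rho>s])
    then show ?thesis by (subst (asm) AE_distr_iff) auto
  qed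
  have AE0: "AE \<omega> in \<Omega>. Y \<omega> \<in> {0..L}"
  proof -
    have "AE x in distr \<Omega> borel Y. x \<in> {0..L}" unfolding dY by (rule probI_AE[OF \<rho>])
    then show ?thesis by (subst (asm) AE_distr_iff) auto
  qed
  have AEall: "AE \<omega> in \<Omega>. \<forall>n. Ys n \<omega> \<in> {0..L}"
    using AEn by (simp add: AE_all_countable)
  have AElim: "AE \<omega> in \<Omega>. (\<lambda>n. F n (Ys n \<omega>)) \<longlonglongrightarrow> G (Y \<omega>)"
    using AEall AE0 AE_space
  proof eventually_elim
    case (elim \<omega>)
    then show ?case using conv[of "\<lambda>n. Ys n \<omega>" "Y \<omega>"] lim[of \<omega>] by blast
  qed
  have "(\<lambda>n. \<integral>\<omega>. F n (Ys n \<omega>) \<partial>\<Omega>) \<longlonglongrightarrow> (\<integral>\<omega>. G (Y \<omega>) \<partial>\<Omega>)"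
  proof (rule integral_dominated_convergence[where w="\<lambda>_. B"])
    show "AE x in \<Omega>. norm (F n (Ys n x)) \<le> B" for n
      using AEn[of n] by eventually_elim (use bnd in auto)
  qed (use AElim in auto)
  moreover have "integral\<^sup>L (\<rho>s n) (F n) = (\<integral>\<omega>. F n (Ys n \<omega>) \<partial>\<Omega>)" for n
    unfolding dYs[symmetric] by (rule integral_distr) auto
  moreover have "integral\<^sup>L \<rho> G = (\<integral>\<omega>. G (Y \<omega>) \<partial>\<Omega>)"
    unfolding dY[symmetric] by (rule integral_distr) auto
  ultimately show ?thesis by simp
qed

definition cc :: "real \<Rightarrow> nat \<Rightarrow> real" where "cc lam k = poisson_w lam k / real (Suc k)"

definition SS :: "(real \<Rightarrow> real) \<Rightarrow> real \<Rightarrow> real measure \<Rightarrow> real \<Rightarrow> real" where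
  "SS f lam \<mu> x = (\<Sum>k. cc lam k * gk f k \<mu> x)"

locale setting =
  fixes f :: "real \<Rightarrow> real" and a b lam L :: real
  assumes fc: "continuous_on UNIV f" and a: "a > 0" and fb: "\<And>x. \<bar>f x\<bar> \<le> a * cosh (b * x)"
    and lam: "lam > 0" and L: "L > 0"
begin

abbreviation "E \<equiv> exp (\<bar>b\<bar> * L)"

lemma fm[measurable]: "f \<in> borel_measurable borel"
  using fc by (rule borel_measurable_continuous_onI)

lemma gk_conv:
  "(\<And>n. \<rho>s n \<in> probI L) \<Longrightarrow> \<rho> \<in> probI L \<Longrightarrow> vague_conv \<rho>s \<rho> \<Longrightarrow> xs \<longlonglongrightarrow> x
   \<Longrightarrow> (\<lambda>n. gk f k (\<rho>s n) (xs n)) \<longlonglongrightarrow> gk f k \<rho> x"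
proof (induction k arbitrary: \<rho>s \<rho> xs x)
  case 0
  have "isCont f x" using fc by (simp add: continuous_on_eq_continuous_at)
  then show ?case using 0 by (simp add: gk_0[OF fc] isCont_tendsto_compose)
next
  case (Suc k)
  have cont: "continuous_on UNIV (gk f k \<nu>)" if \<nu>: "\<nu> \<in> probI L" for \<nu>
  proof -
    have "isCont (gk f k \<nu>) y" for y
    proof (rule continuous_at_sequentiallyI)
      fix u :: "nat \<Rightarrow> real" assume "u \<longlonglongrightarrow> y"
      then show "(\<lambda>n. gk f k \<nu> (u n)) \<longlonglongrightarrow> gk f k \<nu> y"
        using Suc.IH[of "\<lambda>_. \<nu>" \<nu> u y] \<nu> by (simp add: vague_conv_def)
    qed
    then show ?thesis by (simp add: continuous_at_imp_continuous_on)
  qed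
  have "Bseq xs" using Suc.prems(4) by (intro convergent_imp_Bseq convergentI)
  then obtain X where X: "X > 0" "\<And>n. \<bar>xs n\<bar> \<le> X" by (auto elim: BseqE)
  have "(\<lambda>n. \<integral>t. gk f k (\<rho>s n) (xs n + t) \<partial>\<rho>s n) \<longlonglongrightarrow> (\<integral>t. gk f k \<rho> (x + t) \<partial>\<rho>)"
  proof (rule conv_lemma[where B = "a * exp (\<bar>b\<bar> * (X + L)) * E ^ k"])
    show "\<And>n. \<rho>s n \<in> probI L" "\<rho> \<in> probI L" "vague_conv \<rho>s \<rho>" by (fact Suc.prems)+
    show "(\<lambda>t. gk f k (\<rho>s n) (xs n + t)) \<in> borel_measurable borel" for n
      by (rule borel_measurable_continuous_onI, rule continuous_on_compose2[OF cont[OF Suc.prems(1)]])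
         (auto intro: continuous_intros)
    show "(\<lambda>t. gk f k \<rho> (x + t)) \<in> borel_measurable borel"
      by (rule borel_measurable_continuous_onI, rule continuous_on_compose2[OF cont[OF Suc.prems(2)]])
         (auto intro: continuous_intros)
    show "(\<lambda>n. gk f k (\<rho>s n) (xs n + ts n)) \<longlonglongrightarrow> gk f k \<rho> (x + t)" if "ts \<longlonglongrightarrow> t" for ts t
      using Suc.IH[OF Suc.prems(1-3), of "\<lambda>n. xs n + ts n" "x + t"] Suc.prems(4) that
      by (simp add: tendsto_add)
    show "\<bar>gk f k (\<rho>s n) (xs n + y)\<bar> \<le> a * exp (\<bar>b\<bar> * (X + L)) * E ^ k" if y: "y \<in> {0..L}" for n y
    proof -
      have "\<bar>gk f k (\<rho>s n) (xs n + y)\<bar> \<le> a * exp (\<bar>b\<bar> * \<bar>xs n + y\<bar>) * E ^ k"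
        by (rule gk_bound[OF fb a L fc Suc.prems(1)])
      also have "\<dots> \<le> a * exp (\<bar>b\<bar> * (X + L)) * E ^ k"
      proof -
        have "\<bar>xs n + y\<bar> \<le> X + L" using X(2)[of n] y by auto
        then have "\<bar>b\<bar> * \<bar>xs n + y\<bar> \<le> \<bar>b\<bar> * (X + L)" by (rule mult_left_mono) simp
        then show ?thesis using a by (intro mult_right_mono mult_left_mono) auto
      qed
      finally show ?thesis .
    qed
  qed
  moreover have "gk f (Suc k) (\<rho>s n) (xs n) = (\<integral>t. gk f k (\<rho>s n) (xs n + t) \<partial>\<rho>s n)" for n
    by (rule gk_Suc[OF fc Suc.prems(1)])
  moreover have "gk f (Suc k) \<rho> x = (\<integral>t. gk f k \<rho> (x + t) \<partial>\<rho>)"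
    by (rule gk_Suc[OF fc Suc.prems(2)])
  ultimately show ?case by simp
qed

lemma gk_cont: "\<nu> \<in> probI L \<Longrightarrow> continuous_on UNIV (gk f k \<nu>)"
proof -
  assume \<nu>: "\<nu> \<in> probI L"
  have "isCont (gk f k \<nu>) y" for y
  proof (rule continuous_at_sequentiallyI)
    fix u :: "nat \<Rightarrow> real" assume "u \<longlonglongrightarrow> y"
    then show "(\<lambda>n. gk f k \<nu> (u n)) \<longlonglongrightarrow> gk f k \<nu> y"
      using gk_conv[of "\<lambda>_. \<nu>" \<nu> u y] \<nu> by (simp add: vague_conv_def)
  qed
  then show ?thesis by (simp add: continuous_at_imp_continuous_on)
qed

lemma P0: "poisson_w lam k \<ge> 0" using lam by (simp add: poisson_w_def)

lemma cc0: "cc lam k \<ge> 0" using P0 by (simp add: cc_def)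

lemma summ_P: "summable (\<lambda>k. poisson_w lam k * r ^ k)"
proof -
  have "summable (\<lambda>k. exp (- lam) * (inverse (fact k) * (lam * r) ^ k))"
    by (intro summable_mult summable_exp)
  then show ?thesis by (simp add: poisson_w_def power_mult_distrib field_simps)
qed

lemma summ_cc: "r \<ge> 0 \<Longrightarrow> summable (\<lambda>k. cc lam k * r ^ k)"
  by (rule summable_comparison_test[OF _ summ_P[of r]])
     (auto intro!: exI[of _ 0] mult_right_mono simp: cc_def cc0 P0 divide_le_eq field_simps abs_mult)

lemma tann:
  assumes lim: "\<And>k. (\<lambda>n. u k n) \<longlonglongrightarrow> v k" and bnd: "\<And>k n. \<bar>u k n\<bar> \<le> C * E ^ k"
  shows "(\<lambda>n. \<Sum>k. cc lam k * u k n) \<longlonglongrightarrow> (\<Sum>k. cc lam k * v k)"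
proof -
  have "eventually (\<lambda>n. summable (\<lambda>k. norm (cc lam k * u k n))) sequentially \<and>
        summable (\<lambda>k. norm (cc lam k * v k)) \<and>
        ((\<lambda>n. \<Sum>k. cc lam k * u k n) \<longlongrightarrow> (\<Sum>k. cc lam k * v k)) sequentially"
  proof (rule tannerys_theorem[where M = "\<lambda>k. C * (cc lam k * E ^ k)"])
    show "(\<lambda>n. cc lam k * u k n) \<longlonglongrightarrow> cc lam k * v k" for k
      by (intro tendsto_mult_left lim)
    show "\<forall>\<^sub>F (k, n) in at_top \<times>\<^sub>F sequentially. norm (cc lam k * u k n) \<le> C * (cc lam k * E ^ k)"
    proof (intro always_eventually allI, clarify)
      fix k n
      have "norm (cc lam k * u k n) = cc lam k * \<bar>u k n\<bar>" using cc0 by (simp add: abs_mult)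
      also have "\<dots> \<le> cc lam k * (C * E ^ k)" by (rule mult_left_mono[OF bnd cc0])
      finally show "norm (cc lam k * u k n) \<le> C * (cc lam k * E ^ k)" by (simp add: algebra_simps)
    qed
    show "summable (\<lambda>k. C * (cc lam k * E ^ k))"
      by (intro summable_mult summ_cc) simp
  qed simp
  then show ?thesis by blast
qed

lemma fbound:
  assumes "\<bar>y\<bar> \<le> \<bar>x\<bar> + real n * L"
  shows "\<bar>f y\<bar> \<le> a * exp (\<bar>b\<bar> * \<bar>x\<bar>) * E ^ n"
proof -
  have "\<bar>f y\<bar> \<le> a * cosh (b * y)" by (rule fb)
  also have "\<dots> \<le> a * exp \<bar>b * y\<bar>" using a cosh_le_exp_abs by simp
  also have "\<bar>b * y\<bar> \<le> \<bar>b\<bar> * \<bar>x\<bar> + real n * (\<bar>b\<bar> * L)"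
  proof -
    have "\<bar>b\<bar> * \<bar>y\<bar> \<le> \<bar>b\<bar> * (\<bar>x\<bar> + real n * L)" using assms by (rule mult_left_mono) simp
    moreover have "\<bar>b * y\<bar> = \<bar>b\<bar> * \<bar>y\<bar>" by (rule abs_mult)
    moreover have "\<bar>b\<bar> * (\<bar>x\<bar> + real n * L) = \<bar>b\<bar> * \<bar>x\<bar> + real n * (\<bar>b\<bar> * L)" by (simp add: algebra_simps)
    ultimately show ?thesis by linarith
  qed
  then have "a * exp \<bar>b * y\<bar> \<le> a * exp (\<bar>b\<bar> * \<bar>x\<bar> + real n * (\<bar>b\<bar> * L))" using a by simp
  also have "\<dots> = a * exp (\<bar>b\<bar> * \<bar>x\<bar>) * E ^ n"
    by (simp add: exp_add exp_of_nat_mult)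
  finally show ?thesis .
qed

lemma mean_sx:
  assumes \<mu>: "\<mu> \<in> probI L"
  shows "mean (sigma_x f lam \<mu> x) = SS f lam \<mu> x"
proof -
  note P = conv_pow_props[OF \<mu>]
  define \<nu> where "\<nu> n = convolution (return borel x) (conv_pow \<mu> n)" for n
  have rp: "prob_space (return borel x)" "sets (return borel x) = sets borel"
    by (simp_all add: prob_space_return)
  have rAE: "AE y in return borel x. y \<in> {x..x}" by (subst AE_return) auto
  have \<nu>p: "prob_space (\<nu> n)" for n unfolding \<nu>_def
    by (rule conv_basic) (use rp P in auto)
  have \<nu>s: "sets (\<nu> n) = sets borel" for n by (simp add: \<nu>_def)
  have \<nu>AE: "AE y in \<nu> n. y \<in> {x + 0..x + real n * L}" for n unfolding \<nu>_def
    by (rule conv_AE) (use rp rAE P in auto)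
  have B: "AE y in \<nu> n. \<bar>f y\<bar> \<le> a * exp (\<bar>b\<bar> * \<bar>x\<bar>) * E ^ n" for n
    using \<nu>AE[of n]
  proof eventually_elim
    case (elim y)
    have "real n * L \<ge> 0" using L by simp
    then have "\<bar>y\<bar> \<le> \<bar>x\<bar> + real n * L" using elim by (auto simp: abs_if)
    then show ?case by (rule fbound)
  qed
  have B0: "a * exp (\<bar>b\<bar> * \<bar>x\<bar>) * E ^ n \<ge> 0" for n using a by simp
  have sm: "summable (\<lambda>n. poisson_w lam n * (a * exp (\<bar>b\<bar> * \<bar>x\<bar>) * E ^ n))"
  proof -
    have "summable (\<lambda>n. (a * exp (\<bar>b\<bar> * \<bar>x\<bar>)) * (poisson_w lam n * E ^ n))"
      by (intro summable_mult summ_P)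
    then show ?thesis by (simp add: algebra_simps)
  qed
  have int: "(\<integral>y. f y \<partial>\<nu> n) = gk f n \<mu> x" for n
  proof -
    have "(\<integral>y. f y \<partial>\<nu> n) = (\<integral>x'. \<integral>s. f (x' + s) \<partial>conv_pow \<mu> n \<partial>return borel x)"
      unfolding \<nu>_def by (rule conv_integral[OF rp(1) _ rp(2) _ rAE _ fc]) (use P in auto)
    also have "(\<lambda>x'. \<integral>s. f (x' + s) \<partial>conv_pow \<mu> n) = gk f n \<mu>" by (simp add: gk_def fun_eq_iff)
    also have "integral\<^sup>L (return borel x) (gk f n \<mu>) = gk f n \<mu> x"
      by (rule integral_return) (auto intro: borel_measurable_continuous_onI gk_cont[OF \<mu>])
    finally show ?thesis .
  qed
  have "mean (sigma_x f lam \<mu> x) = (\<Sum>n. poisson_w lam n * ((\<integral>y. f y \<partial>\<nu> n) / real (Suc n)))"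
    unfolding sigma_x_def \<nu>_def[symmetric]
    by (rule mean_mix[OF _ \<nu>p \<nu>s fm B B0 sm]) (use lam in simp)
  then show ?thesis by (simp add: int SS_def cc_def)
qed

lemma mean_s:
  assumes \<mu>: "\<mu> \<in> probI L"
  shows "mean (sigma f lam \<mu>) = (\<Sum>k. cc lam k * gk f (Suc k) \<mu> 0)"
proof -
  note P = conv_pow_props[OF \<mu>]
  have B: "AE y in conv_pow \<mu> (Suc n). \<bar>f y\<bar> \<le> a * exp (\<bar>b\<bar> * \<bar>0\<bar>) * E ^ (Suc n)" for n
  proof -
    have "AE s in conv_pow \<mu> (Suc n). s \<in> {0..real (Suc n) * L}" using P[of "Suc n"] by blast
    then show ?thesis
  proof eventually_elim
    case (elim y)
    then have "\<bar>y\<bar> \<le> \<bar>0\<bar> + real (Suc n) * L" by auto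
    then show ?case by (rule fbound)
  qed
  qed
  have Pp: "prob_space (conv_pow \<mu> (Suc n))" and Ps: "sets (conv_pow \<mu> (Suc n)) = sets borel" for n
    using P[of "Suc n"] by blast+
  have B0: "a * exp (\<bar>b\<bar> * \<bar>0::real\<bar>) * E ^ (Suc n) \<ge> 0" for n using a by simp
  have sm: "summable (\<lambda>n. poisson_w lam n * (a * exp (\<bar>b\<bar> * \<bar>0::real\<bar>) * E ^ (Suc n)))"
  proof -
    have "summable (\<lambda>n. (a * E) * (poisson_w lam n * E ^ n))"
      by (intro summable_mult summ_P)
    then show ?thesis by (simp add: algebra_simps)
  qed
  have "mean (sigma f lam \<mu>) = (\<Sum>n. poisson_w lam n * ((\<integral>y. f y \<partial>conv_pow \<mu> (Suc n)) / real (Suc n)))"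
    unfolding sigma_def
    by (rule mean_mix[OF _ Pp Ps fm B B0 sm]) (use lam in simp)
  moreover have "(\<integral>y. f y \<partial>conv_pow \<mu> (Suc n)) = gk f (Suc n) \<mu> 0" for n
    by (simp add: gk_def)
  ultimately show ?thesis by (simp add: cc_def)
qed

lemma S_conv:
  assumes \<rho>s: "\<And>n. \<rho>s n \<in> probI L" and \<rho>: "\<rho> \<in> probI L" and vc: "vague_conv \<rho>s \<rho>" and xs: "xs \<longlonglongrightarrow> x"
  shows "(\<lambda>n. SS f lam (\<rho>s n) (xs n)) \<longlonglongrightarrow> SS f lam \<rho> x"
proof -
  have "Bseq xs" using xs by (intro convergent_imp_Bseq convergentI)
  then obtain X where X: "X > 0" "\<And>n. \<bar>xs n\<bar> \<le> X" by (auto elim: BseqE)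
  show ?thesis unfolding SS_def
  proof (rule tann[where C = "a * exp (\<bar>b\<bar> * X)"])
    show "(\<lambda>n. gk f k (\<rho>s n) (xs n)) \<longlonglongrightarrow> gk f k \<rho> x" for k
      by (rule gk_conv[OF \<rho>s \<rho> vc xs])
    show "\<bar>gk f k (\<rho>s n) (xs n)\<bar> \<le> a * exp (\<bar>b\<bar> * X) * E ^ k" for k n
    proof -
      have "\<bar>gk f k (\<rho>s n) (xs n)\<bar> \<le> a * exp (\<bar>b\<bar> * \<bar>xs n\<bar>) * E ^ k"
        by (rule gk_bound[OF fb a L fc \<rho>s])
      also have "\<dots> \<le> a * exp (\<bar>b\<bar> * X) * E ^ k"
        using X(2)[of n] a by (intro mult_right_mono mult_left_mono) (auto intro: mult_left_mono)
      finally show ?thesis .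
    qed
  qed
qed

lemma S_cont: "\<nu> \<in> probI L \<Longrightarrow> continuous_on UNIV (SS f lam \<nu>)"
proof -
  assume \<nu>: "\<nu> \<in> probI L"
  have "isCont (SS f lam \<nu>) y" for y
  proof (rule continuous_at_sequentiallyI)
    fix u :: "nat \<Rightarrow> real" assume "u \<longlonglongrightarrow> y"
    then show "(\<lambda>n. SS f lam \<nu> (u n)) \<longlonglongrightarrow> SS f lam \<nu> y"
      using S_conv[of "\<lambda>_. \<nu>" \<nu> u y] \<nu> by (simp add: vague_conv_def)
  qed
  then show ?thesis by (simp add: continuous_at_imp_continuous_on)
qed

lemma S_bound:
  assumes \<mu>: "\<mu> \<in> probI L" and y: "y \<in> {0..L}"
  shows "\<bar>SS f lam \<mu> y\<bar> \<le> (\<Sum>k. cc lam k * (a * exp (\<bar>b\<bar> * L) * E ^ k))"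
proof -
  define K where "K = a * exp (\<bar>b\<bar> * L)"
  have gb: "\<bar>gk f k \<mu> y\<bar> \<le> K * E ^ k" for k
  proof -
    have "\<bar>gk f k \<mu> y\<bar> \<le> a * exp (\<bar>b\<bar> * \<bar>y\<bar>) * E ^ k" by (rule gk_bound[OF fb a L fc \<mu>])
    also have "\<dots> \<le> K * E ^ k" unfolding K_def
      using y a by (intro mult_right_mono mult_left_mono) (auto intro: mult_left_mono)
    finally show ?thesis .
  qed
  have sg: "summable (\<lambda>k. cc lam k * (K * E ^ k))"
  proof -
    have "summable (\<lambda>k. K * (cc lam k * E ^ k))" by (intro summable_mult summ_cc) simp
    then show ?thesis by (simp add: algebra_simps)
  qed
  have le: "\<bar>cc lam k * gk f k \<mu> y\<bar> \<le> cc lam k * (K * E ^ k)" for k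
    using mult_left_mono[OF gb cc0] cc0 by (simp add: abs_mult)
  have sa: "summable (\<lambda>k. \<bar>cc lam k * gk f k \<mu> y\<bar>)"
    by (rule summable_comparison_test[OF _ sg]) (use le in auto)
  have "\<bar>SS f lam \<mu> y\<bar> \<le> (\<Sum>k. \<bar>cc lam k * gk f k \<mu> y\<bar>)"
    unfolding SS_def by (rule summable_rabs[OF sa])
  also have "\<dots> \<le> (\<Sum>k. cc lam k * (K * E ^ k))"
    by (rule suminf_le[OF le sa sg])
  finally show ?thesis by (simp add: K_def)
qed

lemma mean_conv:
  assumes \<rho>s: "\<And>n. \<rho>s n \<in> probI L" and \<rho>: "\<rho> \<in> probI L" and vc: "vague_conv \<rho>s \<rho>"
  shows "(\<lambda>n. mean (sigma f lam (\<rho>s n))) \<longlonglongrightarrow> mean (sigma f lam \<rho>)"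
proof -
  have "(\<lambda>n. \<Sum>k. cc lam k * gk f (Suc k) (\<rho>s n) 0) \<longlonglongrightarrow> (\<Sum>k. cc lam k * gk f (Suc k) \<rho> 0)"
  proof (rule tann[where C = "a * E"])
    show "(\<lambda>n. gk f (Suc k) (\<rho>s n) 0) \<longlonglongrightarrow> gk f (Suc k) \<rho> 0" for k
      using gk_conv[OF \<rho>s \<rho> vc, of "\<lambda>_. 0" 0 "Suc k"] by simp
    show "\<bar>gk f (Suc k) (\<rho>s n) 0\<bar> \<le> a * E * E ^ k" for k n
      using gk_bound[OF fb a L fc \<rho>s, of "Suc k" n 0] by (simp add: algebra_simps)
  qed
  then show ?thesis using mean_s[OF \<rho>s] mean_s[OF \<rho>] by simp
qed

lemma main:
  "\<forall>\<rho>s \<rho>. (\<forall>n. \<rho>s n \<in> probI L - N_set f lam L) \<and> \<rho> \<in> probI L - N_set f lam L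
            \<and> vague_conv \<rho>s \<rho> \<longrightarrow>
          vague_conv_dens \<rho>s (\<lambda>n. A_density f lam (\<rho>s n)) \<rho> (A_density f lam \<rho>)"
proof (intro allI impI)
  fix \<rho>s \<rho>
  assume H: "(\<forall>n. \<rho>s n \<in> probI L - N_set f lam L) \<and> \<rho> \<in> probI L - N_set f lam L \<and> vague_conv \<rho>s \<rho>"
  then have \<rho>s: "\<And>n. \<rho>s n \<in> probI L" and \<rho>: "\<rho> \<in> probI L" and vc: "vague_conv \<rho>s \<rho>"
    and nz: "mean (sigma f lam \<rho>) \<noteq> 0"
    by (auto simp: N_set_def)
  have A: "A_density f lam \<mu> = (\<lambda>x. SS f lam \<mu> x / mean (sigma f lam \<mu>))" if "\<mu> \<in> probI L" for \<mu>
    using mean_sx[OF that] by (simp add: A_density_def fun_eq_iff)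
  define KS where "KS = (\<Sum>k. cc lam k * (a * exp (\<bar>b\<bar> * L) * E ^ k))"
  show "vague_conv_dens \<rho>s (\<lambda>n. A_density f lam (\<rho>s n)) \<rho> (A_density f lam \<rho>)"
    unfolding vague_conv_dens_def
  proof (intro allI impI)
    fix \<phi> :: "real \<Rightarrow> real"
    assume "continuous_on UNIV \<phi> \<and> compact (closure {x. \<phi> x \<noteq> 0})"
    then have \<phi>c: "continuous_on UNIV \<phi>" by blast
    obtain K\<phi> where K\<phi>: "\<forall>y\<in>{0..L}. \<bar>\<phi> y\<bar> \<le> K\<phi>" using cont_bound[OF \<phi>c] by blast
    have I1: "(\<lambda>n. \<integral>x. \<phi> x * SS f lam (\<rho>s n) x \<partial>\<rho>s n) \<longlonglongrightarrow> (\<integral>x. \<phi> x * SS f lam \<rho> x \<partial>\<rho>)"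
    proof (rule conv_lemma[OF \<rho>s \<rho> vc, where B = "K\<phi> * KS"])
      show "(\<lambda>x. \<phi> x * SS f lam (\<rho>s n) x) \<in> borel_measurable borel" for n
        by (intro borel_measurable_continuous_onI continuous_intros \<phi>c S_cont \<rho>s)
      show "(\<lambda>x. \<phi> x * SS f lam \<rho> x) \<in> borel_measurable borel"
        by (intro borel_measurable_continuous_onI continuous_intros \<phi>c S_cont \<rho>)
      show "(\<lambda>n. \<phi> (ts n) * SS f lam (\<rho>s n) (ts n)) \<longlonglongrightarrow> \<phi> t * SS f lam \<rho> t" if "ts \<longlonglongrightarrow> t" for ts t
      proof (rule tendsto_mult)
        have "isCont \<phi> t" using \<phi>c by (simp add: continuous_on_eq_continuous_at)
        then show "(\<lambda>n. \<phi> (ts n)) \<longlonglongrightarrow> \<phi> t" using that by (rule isCont_tendsto_compose)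
        show "(\<lambda>n. SS f lam (\<rho>s n) (ts n)) \<longlonglongrightarrow> SS f lam \<rho> t" by (rule S_conv[OF \<rho>s \<rho> vc that])
      qed
      show "\<bar>\<phi> y * SS f lam (\<rho>s n) y\<bar> \<le> K\<phi> * KS" if y: "y \<in> {0..L}" for n y
      proof -
        have "\<bar>\<phi> y * SS f lam (\<rho>s n) y\<bar> = \<bar>\<phi> y\<bar> * \<bar>SS f lam (\<rho>s n) y\<bar>" by (rule abs_mult)
        also have "\<dots> \<le> K\<phi> * KS"
          using K\<phi> y S_bound[OF \<rho>s y, of n] unfolding KS_def
          by (intro mult_mono) auto
        finally show ?thesis .
      qed
    qed
    have "(\<lambda>n. (\<integral>x. \<phi> x * SS f lam (\<rho>s n) x \<partial>\<rho>s n) / mean (sigma f lam (\<rho>s n)))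
          \<longlonglongrightarrow> (\<integral>x. \<phi> x * SS f lam \<rho> x \<partial>\<rho>) / mean (sigma f lam \<rho>)"
      by (rule tendsto_divide[OF I1 mean_conv[OF \<rho>s \<rho> vc] nz])
    then show "(\<lambda>n. \<integral>x. \<phi> x * A_density f lam (\<rho>s n) x \<partial>\<rho>s n) \<longlonglongrightarrow> (\<integral>x. \<phi> x * A_density f lam \<rho> x \<partial>\<rho>)"
      by (simp add: A[OF \<rho>s] A[OF \<rho>] integral_divide_zero)
  qed
qed

end

theorem theorem5:
  fixes f :: "real \<Rightarrow> real" and a b lam L :: real
  assumes "continuous_on UNIV f"
    and "a > 0"
    and "\<And>x. \<bar>f x\<bar> \<le> a * cosh (b * x)"
    and "lam > 0"
    and "L > 0"
  shows "\<forall>\<rho>s \<rho>. (\<forall>n. \<rho>s n \<in> probI L - N_set f lam L) \<and> \<rho> \<in> probI L - N_set f lam L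
            \<and> vague_conv \<rho>s \<rho> \<longrightarrow>
          vague_conv_dens \<rho>s (\<lambda>n. A_density f lam (\<rho>s n)) \<rho> (A_density f lam \<rho>)"
  proof -
  interpret setting f a b lam L using assms by unfold_locales
  show ?thesis by (rule main)
qed

end
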